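(* For every CCCP configuration $\mathcal C$: if $\mathcal C\xrightarrow{\sigma}W_1$ for some $W_1$, then for $\lambda=\tau$ and for every $\lambda=c!v$ (any channel $c$, closed value $v$) there is no $W_2$ with $\mathcal C\xrightarrow{\lambda}W_2$.
   Context: CCCP syntax. Fix a set of channels (ranged over by $c,d$) and a set of values containing data variables $x,y$ and a special error value $\mathtt{err}$; closed values $v,w$ contain no variables, and each closed value $v$ has a transmission time $\delta_v\in\mathbb{N}$ with $\delta_v\ge 1$. Expressions $e$ are built from values; closed expressions evaluate to closed values via $[\![e]\!]$. Station code (processes) is given by $P,Q ::= c!\langle e\rangle.P \mid \lfloor ?c(x).P\rfloor Q \mid \sigma.P \mid \tau.P \mid P+Q \mid [b]P,Q \mid X \mid \mathbf{0} \mid \mathrm{fix}\,X.P$, where $b$ is either $e_1=e_2$ or $\mathrm{exp}(c)$, $[b]P,Q$ is a conditional (then-branch $P$, else-branch $Q$), $\lfloor ?c(x).P\rfloor Q$ is a receiver on $c$ with timeout branch $Q$ ($x$ bound in $P$), $\sigma.P$ is a one-unit delay and $\sigma^n.P$ denotes $n$ nested delays. System terms are $W ::= P \mid \lfloor ?c(x).P\rfloor \mid W_1|W_2 \mid \nu c{:}(n,v).W$, where $\lfloor ?c(x).P\rfloor$ is an active receiver ($x$ bound in $P$) and $\nu c{:}(n,v).W$ restricts $c$ with local channel state $(n,v)$. In $\mathrm{fix}\,X.P$ every occurrence of $X$ in $P$ is guarded, i.e. lies within a broadcast prefix, a receiver continuation, a timeout branch, a $\sigma$-prefix, or a branch of a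 conditional. Terms are identified up to $\alpha$-conversion. A channel environment is a map $\Gamma$ from channels to $\mathbb{N}\times$(closed values); write $\Gamma\vdash_t c:n$ and $\Gamma\vdash_v c:w$ when $\Gamma(c)=(n,w)$; $c$ is idle in $\Gamma$ if $\Gamma\vdash_t c:0$ and exposed otherwise; $\Gamma[c\mapsto(n,v)]$ is $\Gamma$ updated at $c$; $\Gamma\le\Gamma'$ iff for every $c$, $\Gamma\vdash_t c:n$ and $\Gamma'\vdash_t c:m$ imply $n\le m$. A configuration $\Gamma\triangleright W$ is a channel environment together with a closed system term (no free data or process variables). Intensional semantics. Actions $\lambda$ are $c!v$, $c?v$, $\sigma$, $\tau$. The environment update $\lambda(\Gamma)$ is: $\sigma(\Gamma)(c)=(\max(n-1,0),w)$ whenever $\Gamma(c)=(n,w)$; $c!v(\Gamma)$ agrees with $\Gamma$ except at $c$, where it is $(\delta_v,v)$ if $c$ is idle in $\Gamma$ and $(\max(\delta_v,n),\mathtt{err})$ if $\Gamma\vdash_t c:n>0$; $c?v(\Gamma)=c!v(\Gamma)$; $\tau(\Gamma)=\Gamma$. The predicate $\mathrm{rcv}(W,c)$ on terms is: true for $\lfloor ?d(x).P\rfloor Q$ iff $d=c$; $\mathrm{rcv}(P+Q,c)=\mathrm{rcv}(P,c)\vee\mathrm{rcv}(Q,c)$; $\mathrm{rcv}(\mathrm{fix}\,X.P,c)=\mathrm{rcv}(P,c)$; $\mathrm{rcv}(W_1|W_2,c)=\mathrm{rcv}(W_1,c)\vee\mathrm{rcv}(W_2,c)$; $\mathrm{rcv}(\nu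 d{:}(n,v).W,c)=\mathrm{rcv}(W,c)$ (with $d\neq c$ by $\alpha$-conversion); false for all other forms (broadcasts, $\tau.P$, $\sigma.P$, conditionals, $X$, $\mathbf 0$, active receivers). Then $\mathrm{rcv}(\Gamma\triangleright W,c)$ holds iff $c$ is idle in $\Gamma$ and $\mathrm{rcv}(W,c)$. Transitions $\Gamma\triangleright W\xrightarrow{\lambda}W'$ are the least relation closed under: (Snd) $[\![e]\!]=v$ implies $\Gamma\triangleright c!\langle e\rangle.P\xrightarrow{c!v}\sigma^{\delta_v}.P$; (Rcv) $c$ idle in $\Gamma$ implies $\Gamma\triangleright\lfloor ?c(x).P\rfloor Q\xrightarrow{c?v}\lfloor ?c(x).P\rfloor$; (RcvIgn) $\neg\mathrm{rcv}(\Gamma\triangleright W,c)$ implies $\Gamma\triangleright W\xrightarrow{c?v}W$; (Sync) $\Gamma\triangleright W_1\xrightarrow{c!v}W_1'$ and $\Gamma\triangleright W_2\xrightarrow{c?v}W_2'$ imply $\Gamma\triangleright W_1|W_2\xrightarrow{c!v}W_1'|W_2'$, and symmetrically; (RcvPar) $\Gamma\triangleright W_i\xrightarrow{c?v}W_i'$ for $i=1,2$ imply $\Gamma\triangleright W_1|W_2\xrightarrow{c?v}W_1'|W_2'$; (TimeNil) $\Gamma\triangleright\mathbf 0\xrightarrow{\sigma}\mathbf 0$; (Sleep) $\Gamma\triangleright\sigma.P\xrightarrow{\sigma}P$; (ActRcv) $\Gamma\vdash_t c:n$, $n>1$ imply $\Gamma\triangleright\lfloor ?c(x).P\rfloor\xrightarrow{\sigma}\lfloor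 ?c(x).P\rfloor$; (EndRcv) $\Gamma\vdash_t c:1$, $\Gamma\vdash_v c:w$ imply $\Gamma\triangleright\lfloor ?c(x).P\rfloor\xrightarrow{\sigma}\{w/x\}P$; (Timeout) $c$ idle in $\Gamma$ implies $\Gamma\triangleright\lfloor ?c(x).P\rfloor Q\xrightarrow{\sigma}Q$; (RcvLate) $c$ exposed in $\Gamma$ implies $\Gamma\triangleright\lfloor ?c(x).P\rfloor Q\xrightarrow{\tau}\lfloor ?c(x).\{\mathtt{err}/x\}P\rfloor$; (Tau) $\Gamma\triangleright\tau.P\xrightarrow{\tau}P$; (Then)/(Else) $\Gamma\triangleright[b]P,Q\xrightarrow{\tau}\sigma.P$ if $[\![b]\!]_\Gamma$ is true and $\xrightarrow{\tau}\sigma.Q$ otherwise, where $[\![e_1=e_2]\!]_\Gamma$ is true iff $[\![e_1]\!]=[\![e_2]\!]$ and $[\![\mathrm{exp}(c)]\!]_\Gamma$ is true iff $c$ is exposed in $\Gamma$; (TimePar) $\Gamma\triangleright W_i\xrightarrow{\sigma}W_i'$ for $i=1,2$ imply $\Gamma\triangleright W_1|W_2\xrightarrow{\sigma}W_1'|W_2'$; (TauPar) $\Gamma\triangleright W_1\xrightarrow{\tau}W_1'$ implies $\Gamma\triangleright W_1|W_2\xrightarrow{\tau}W_1'|W_2$, and symmetrically; (Rec) $\Gamma\triangleright\{\mathrm{fix}\,X.P/X\}P\xrightarrow{\lambda}W$ implies $\Gamma\triangleright\mathrm{fix}\,X.P\xrightarrow{\lambda}W$; (Sum) for $\lambda\in\{\tau,c!v\}$,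 $\Gamma\triangleright P\xrightarrow{\lambda}W$ implies $\Gamma\triangleright P+Q\xrightarrow{\lambda}W$, and symmetrically; (SumTime) $\Gamma\triangleright P\xrightarrow{\sigma}P'$, $\Gamma\triangleright Q\xrightarrow{\sigma}Q'$ imply $\Gamma\triangleright P+Q\xrightarrow{\sigma}P'+Q'$; (SumRcv) $\Gamma\triangleright P\xrightarrow{c?v}W$ and $\mathrm{rcv}(\Gamma\triangleright P,c)$ imply $\Gamma\triangleright P+Q\xrightarrow{c?v}W$, and symmetrically; (ResI) $\Gamma[c\mapsto(n,v)]\triangleright W\xrightarrow{c!w}W'$ implies $\Gamma\triangleright\nu c{:}(n,v).W\xrightarrow{\tau}\nu c{:}(c!w(\Gamma[c\mapsto(n,v)]))(c).W'$; (ResV) $\Gamma[c\mapsto(n,v)]\triangleright W\xrightarrow{\lambda}W'$ with $c$ not occurring in $\lambda$ implies $\Gamma\triangleright\nu c{:}(n,v).W\xrightarrow{\lambda}\nu c{:}(\lambda(\Gamma[c\mapsto(n,v)]))(c).W'$. *)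

theory Defs
  imports Main
begin

type_synonym var = string
type_synonym pvar = string

datatype 'a cval = CErr | CBase 'a

datatype 'a val = VVar var | VC "'a cval"

datatype ('a,'f) expr = EVal "'a val" | EOp 'f "('a,'f) expr list"

datatype ('c,'a,'f) bexp = BEq "('a,'f) expr" "('a,'f) expr" | BExp 'c

datatype ('c,'a,'f) proc =
    PSnd 'c "('a,'f) expr" "('c,'a,'f) proc"
  | PRcv 'c var "('c,'a,'f) proc" "('c,'a,'f) proc"                 \<comment> \<open>|?c(x).P|Q\<close>
  | PSleep "('c,'a,'f) proc"
  | PTau "('c,'a,'f) proc"
  | PSum "('c,'a,'f) proc" "('c,'a,'f) proc"
  | PCond "('c,'a,'f) bexp" "('c,'a,'f) proc" "('c,'a,'f) proc"     \<comment> \<open>[b]P,Q\<close>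
  | PVar pvar
  | PNil
  | PFix pvar "('c,'a,'f) proc"

datatype ('c,'a,'f) sys =
    SProc "('c,'a,'f) proc"
  | SActRcv 'c var "('c,'a,'f) proc"
  | SPar "('c,'a,'f) sys" "('c,'a,'f) sys"
  | SRes 'c nat "'a cval" "('c,'a,'f) sys"                          \<comment> \<open>nu c:(n,v).W\<close>

datatype ('c,'a) label = LOut 'c "'a cval" | LIn 'c "'a cval" | LSigma | LTau

type_synonym ('c,'a) env = "'c \<Rightarrow> nat \<times> 'a cval"

fun sigmas :: "nat \<Rightarrow> ('c,'a,'f) proc \<Rightarrow> ('c,'a,'f) proc" where
  "sigmas 0 P = P"
| "sigmas (Suc n) P = PSleep (sigmas n P)"

fun eval :: "('f \<Rightarrow> 'a cval list \<Rightarrow> 'a cval) \<Rightarrow> ('a,'f) expr \<Rightarrow> 'a cval option" where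
  "eval I (EVal (VVar x)) = None"
| "eval I (EVal (VC v)) = Some v"
| "eval I (EOp f es) =
     (if None \<in> set (map (eval I) es) then None else Some (I f (map (the \<circ> eval I) es)))"

fun fv_e :: "('a,'f) expr \<Rightarrow> var set" where
  "fv_e (EVal (VVar x)) = {x}"
| "fv_e (EVal (VC v)) = {}"
| "fv_e (EOp f es) = \<Union> (set (map fv_e es))"

fun fv_b :: "('c,'a,'f) bexp \<Rightarrow> var set" where
  "fv_b (BEq e1 e2) = fv_e e1 \<union> fv_e e2"
| "fv_b (BExp c) = {}"

fun fv_p :: "('c,'a,'f) proc \<Rightarrow> var set" where
  "fv_p (PSnd c e P) = fv_e e \<union> fv_p P"
| "fv_p (PRcv c x P Q) = (fv_p P - {x}) \<union> fv_p Q"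
| "fv_p (PSleep P) = fv_p P"
| "fv_p (PTau P) = fv_p P"
| "fv_p (PSum P Q) = fv_p P \<union> fv_p Q"
| "fv_p (PCond b P Q) = fv_b b \<union> fv_p P \<union> fv_p Q"
| "fv_p (PVar X) = {}"
| "fv_p PNil = {}"
| "fv_p (PFix X P) = fv_p P"

fun fpv_p :: "('c,'a,'f) proc \<Rightarrow> pvar set" where
  "fpv_p (PSnd c e P) = fpv_p P"
| "fpv_p (PRcv c x P Q) = fpv_p P \<union> fpv_p Q"
| "fpv_p (PSleep P) = fpv_p P"
| "fpv_p (PTau P) = fpv_p P"
| "fpv_p (PSum P Q) = fpv_p P \<union> fpv_p Q"
| "fpv_p (PCond b P Q) = fpv_p P \<union> fpv_p Q"
| "fpv_p (PVar X) = {X}"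
| "fpv_p PNil = {}"
| "fpv_p (PFix X P) = fpv_p P - {X}"

fun fv_s :: "('c,'a,'f) sys \<Rightarrow> var set" where
  "fv_s (SProc P) = fv_p P"
| "fv_s (SActRcv c x P) = fv_p P - {x}"
| "fv_s (SPar W1 W2) = fv_s W1 \<union> fv_s W2"
| "fv_s (SRes c n v W) = fv_s W"

fun fpv_s :: "('c,'a,'f) sys \<Rightarrow> pvar set" where
  "fpv_s (SProc P) = fpv_p P"
| "fpv_s (SActRcv c x P) = fpv_p P"
| "fpv_s (SPar W1 W2) = fpv_s W1 \<union> fpv_s W2"
| "fpv_s (SRes c n v W) = fpv_s W"

definition closed_sys :: "('c,'a,'f) sys \<Rightarrow> bool" where
  "closed_sys W \<longleftrightarrow> fv_s W = {} \<and> fpv_s W = {}"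

text \<open>Substitution of a closed value w for a data variable x (no capture possible,
  since w is closed).\<close>
fun subst_e :: "'a cval \<Rightarrow> var \<Rightarrow> ('a,'f) expr \<Rightarrow> ('a,'f) expr" where
  "subst_e w x (EVal (VVar y)) = (if y = x then EVal (VC w) else EVal (VVar y))"
| "subst_e w x (EVal (VC v)) = EVal (VC v)"
| "subst_e w x (EOp f es) = EOp f (map (subst_e w x) es)"

fun subst_b :: "'a cval \<Rightarrow> var \<Rightarrow> ('c,'a,'f) bexp \<Rightarrow> ('c,'a,'f) bexp" where
  "subst_b w x (BEq e1 e2) = BEq (subst_e w x e1) (subst_e w x e2)"
| "subst_b w x (BExp c) = BExp c"

fun subst_p :: "'a cval \<Rightarrow> var \<Rightarrow> ('c,'a,'f) proc \<Rightarrow> ('c,'a,'f) proc" where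
  "subst_p w x (PSnd c e P) = PSnd c (subst_e w x e) (subst_p w x P)"
| "subst_p w x (PRcv c y P Q) =
     PRcv c y (if y = x then P else subst_p w x P) (subst_p w x Q)"
| "subst_p w x (PSleep P) = PSleep (subst_p w x P)"
| "subst_p w x (PTau P) = PTau (subst_p w x P)"
| "subst_p w x (PSum P Q) = PSum (subst_p w x P) (subst_p w x Q)"
| "subst_p w x (PCond b P Q) = PCond (subst_b w x b) (subst_p w x P) (subst_p w x Q)"
| "subst_p w x (PVar X) = PVar X"
| "subst_p w x PNil = PNil"
| "subst_p w x (PFix X P) = PFix X (subst_p w x P)"

fun psubst :: "('c,'a,'f) proc \<Rightarrow> pvar \<Rightarrow> ('c,'a,'f) proc \<Rightarrow> ('c,'a,'f) proc" where
  "psubst R X (PSnd c e P) = PSnd c e (psubst R X P)"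
| "psubst R X (PRcv c y P Q) = PRcv c y (psubst R X P) (psubst R X Q)"
| "psubst R X (PSleep P) = PSleep (psubst R X P)"
| "psubst R X (PTau P) = PTau (psubst R X P)"
| "psubst R X (PSum P Q) = PSum (psubst R X P) (psubst R X Q)"
| "psubst R X (PCond b P Q) = PCond b (psubst R X P) (psubst R X Q)"
| "psubst R X (PVar Y) = (if Y = X then R else PVar Y)"
| "psubst R X PNil = PNil"
| "psubst R X (PFix Y P) = (if Y = X then PFix Y P else PFix Y (psubst R X P))"

text \<open>ug X P: X has an unguarded free occurrence in P. Guards are broadcast prefixes,
  receiver continuations, timeout branches, sigma-prefixes and conditional branches
  (tau-prefixes and sums are not guards).\<close>
fun ug :: "pvar \<Rightarrow> ('c,'a,'f) proc \<Rightarrow> bool" where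
  "ug X (PVar Y) = (X = Y)"
| "ug X (PSum P Q) = (ug X P \<or> ug X Q)"
| "ug X (PTau P) = ug X P"
| "ug X (PFix Y P) = (X \<noteq> Y \<and> ug X P)"
| "ug X _ = False"

fun wf_p :: "('c,'a,'f) proc \<Rightarrow> bool" where
  "wf_p (PSnd c e P) = wf_p P"
| "wf_p (PRcv c x P Q) = (wf_p P \<and> wf_p Q)"
| "wf_p (PSleep P) = wf_p P"
| "wf_p (PTau P) = wf_p P"
| "wf_p (PSum P Q) = (wf_p P \<and> wf_p Q)"
| "wf_p (PCond b P Q) = (wf_p P \<and> wf_p Q)"
| "wf_p (PVar X) = True"
| "wf_p PNil = True"
| "wf_p (PFix X P) = (\<not> ug X P \<and> wf_p P)"

fun wf_s :: "('c,'a,'f) sys \<Rightarrow> bool" where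
  "wf_s (SProc P) = wf_p P"
| "wf_s (SActRcv c x P) = wf_p P"
| "wf_s (SPar W1 W2) = (wf_s W1 \<and> wf_s W2)"
| "wf_s (SRes c n v W) = wf_s W"

definition idle :: "('c,'a) env \<Rightarrow> 'c \<Rightarrow> bool" where
  "idle \<Gamma> c \<longleftrightarrow> fst (\<Gamma> c) = 0"

definition exposed :: "('c,'a) env \<Rightarrow> 'c \<Rightarrow> bool" where
  "exposed \<Gamma> c \<longleftrightarrow> \<not> idle \<Gamma> c"

text \<open>Environment update lambda(Gamma); delta is the transmission time of closed values.\<close>
fun upd :: "('a cval \<Rightarrow> nat) \<Rightarrow> ('c,'a) label \<Rightarrow> ('c,'a) env \<Rightarrow> ('c,'a) env" where
  "upd \<delta> LSigma \<Gamma> = (\<lambda>d. (max (fst (\<Gamma> d) - 1) 0, snd (\<Gamma> d)))"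
| "upd \<delta> (LOut c v) \<Gamma> = \<Gamma>(c := (if idle \<Gamma> c then (\<delta> v, v)
                                   else (max (\<delta> v) (fst (\<Gamma> c)), CErr)))"
| "upd \<delta> (LIn c v) \<Gamma> = \<Gamma>(c := (if idle \<Gamma> c then (\<delta> v, v)
                                   else (max (\<delta> v) (fst (\<Gamma> c)), CErr)))"
| "upd \<delta> LTau \<Gamma> = \<Gamma>"

fun chan_of :: "('c,'a) label \<Rightarrow> 'c option" where
  "chan_of (LOut c v) = Some c"
| "chan_of (LIn c v) = Some c"
| "chan_of _ = None"

text \<open>For a restriction nu d.W the paper assumes d different from c by
  alpha-conversion; in this named representation a bound d = c shadows c, so
  no receiver on the free channel c can occur inside.\<close>
fun rcv_p :: "('c,'a,'f) proc \<Rightarrow> 'c \<Rightarrow> bool" where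
  "rcv_p (PRcv d x P Q) c = (d = c)"
| "rcv_p (PSum P Q) c = (rcv_p P c \<or> rcv_p Q c)"
| "rcv_p (PFix X P) c = rcv_p P c"
| "rcv_p _ c = False"

fun rcv_s :: "('c,'a,'f) sys \<Rightarrow> 'c \<Rightarrow> bool" where
  "rcv_s (SProc P) c = rcv_p P c"
| "rcv_s (SActRcv d x P) c = False"
| "rcv_s (SPar W1 W2) c = (rcv_s W1 c \<or> rcv_s W2 c)"
| "rcv_s (SRes d n v W) c = (d \<noteq> c \<and> rcv_s W c)"

definition rcv_conf :: "('c,'a) env \<Rightarrow> ('c,'a,'f) sys \<Rightarrow> 'c \<Rightarrow> bool" where
  "rcv_conf \<Gamma> W c \<longleftrightarrow> idle \<Gamma> c \<and> rcv_s W c"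

fun beval :: "('f \<Rightarrow> 'a cval list \<Rightarrow> 'a cval) \<Rightarrow> ('c,'a) env \<Rightarrow> ('c,'a,'f) bexp \<Rightarrow> bool" where
  "beval I \<Gamma> (BEq e1 e2) = (eval I e1 = eval I e2)"
| "beval I \<Gamma> (BExp c) = exposed \<Gamma> c"

inductive step :: "('a cval \<Rightarrow> nat) \<Rightarrow> ('f \<Rightarrow> 'a cval list \<Rightarrow> 'a cval) \<Rightarrow> ('c,'a) env
                   \<Rightarrow> ('c,'a,'f) sys \<Rightarrow> ('c,'a) label \<Rightarrow> ('c,'a,'f) sys \<Rightarrow> bool"
  for \<delta> I where
  Snd: "eval I e = Some v \<Longrightarrow>
        step \<delta> I \<Gamma> (SProc (PSnd c e P)) (LOut c v) (SProc (sigmas (\<delta> v) P))"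
| Rcv: "idle \<Gamma> c \<Longrightarrow> step \<delta> I \<Gamma> (SProc (PRcv c x P Q)) (LIn c v) (SActRcv c x P)"
| RcvIgn: "\<not> rcv_conf \<Gamma> W c \<Longrightarrow> step \<delta> I \<Gamma> W (LIn c v) W"
| Sync1: "step \<delta> I \<Gamma> W1 (LOut c v) W1' \<Longrightarrow> step \<delta> I \<Gamma> W2 (LIn c v) W2' \<Longrightarrow>
          step \<delta> I \<Gamma> (SPar W1 W2) (LOut c v) (SPar W1' W2')"
| Sync2: "step \<delta> I \<Gamma> W1 (LIn c v) W1' \<Longrightarrow> step \<delta> I \<Gamma> W2 (LOut c v) W2' \<Longrightarrow>
          step \<delta> I \<Gamma> (SPar W1 W2) (LOut c v) (SPar W1' W2')"
| RcvPar: "step \<delta> I \<Gamma> W1 (LIn c v) W1' \<Longrightarrow> step \<delta> I \<Gamma> W2 (LIn c v) W2' \<Longrightarrow>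
          step \<delta> I \<Gamma> (SPar W1 W2) (LIn c v) (SPar W1' W2')"
| TimeNil: "step \<delta> I \<Gamma> (SProc PNil) LSigma (SProc PNil)"
| Sleep: "step \<delta> I \<Gamma> (SProc (PSleep P)) LSigma (SProc P)"
| ActRcv: "fst (\<Gamma> c) > 1 \<Longrightarrow> step \<delta> I \<Gamma> (SActRcv c x P) LSigma (SActRcv c x P)"
| EndRcv: "\<Gamma> c = (1, w) \<Longrightarrow> step \<delta> I \<Gamma> (SActRcv c x P) LSigma (SProc (subst_p w x P))"
| Timeout: "idle \<Gamma> c \<Longrightarrow> step \<delta> I \<Gamma> (SProc (PRcv c x P Q)) LSigma (SProc Q)"
| RcvLate: "exposed \<Gamma> c \<Longrightarrow>
            step \<delta> I \<Gamma> (SProc (PRcv c x P Q)) LTau (SActRcv c x (subst_p CErr x P))"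
| Tau: "step \<delta> I \<Gamma> (SProc (PTau P)) LTau (SProc P)"
| Then: "beval I \<Gamma> b \<Longrightarrow> step \<delta> I \<Gamma> (SProc (PCond b P Q)) LTau (SProc (PSleep P))"
| Else: "\<not> beval I \<Gamma> b \<Longrightarrow> step \<delta> I \<Gamma> (SProc (PCond b P Q)) LTau (SProc (PSleep Q))"
| TimePar: "step \<delta> I \<Gamma> W1 LSigma W1' \<Longrightarrow> step \<delta> I \<Gamma> W2 LSigma W2' \<Longrightarrow>
            step \<delta> I \<Gamma> (SPar W1 W2) LSigma (SPar W1' W2')"
| TauPar1: "step \<delta> I \<Gamma> W1 LTau W1' \<Longrightarrow> step \<delta> I \<Gamma> (SPar W1 W2) LTau (SPar W1' W2)"
| TauPar2: "step \<delta> I \<Gamma> W2 LTau W2' \<Longrightarrow> step \<delta> I \<Gamma> (SPar W1 W2) LTau (SPar W1 W2')"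
| Rec: "step \<delta> I \<Gamma> (SProc (psubst (PFix X P) X P)) l W \<Longrightarrow>
        step \<delta> I \<Gamma> (SProc (PFix X P)) l W"
| Sum1: "l = LTau \<or> (\<exists>c v. l = LOut c v) \<Longrightarrow> step \<delta> I \<Gamma> (SProc P) l W \<Longrightarrow>
         step \<delta> I \<Gamma> (SProc (PSum P Q)) l W"
| Sum2: "l = LTau \<or> (\<exists>c v. l = LOut c v) \<Longrightarrow> step \<delta> I \<Gamma> (SProc Q) l W \<Longrightarrow>
         step \<delta> I \<Gamma> (SProc (PSum P Q)) l W"
| SumTime: "step \<delta> I \<Gamma> (SProc P) LSigma (SProc P') \<Longrightarrow> step \<delta> I \<Gamma> (SProc Q) LSigma (SProc Q') \<Longrightarrow>
            step \<delta> I \<Gamma> (SProc (PSum P Q)) LSigma (SProc (PSum P' Q'))"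
| SumRcv1: "step \<delta> I \<Gamma> (SProc P) (LIn c v) W \<Longrightarrow> rcv_conf \<Gamma> (SProc P) c \<Longrightarrow>
            step \<delta> I \<Gamma> (SProc (PSum P Q)) (LIn c v) W"
| SumRcv2: "step \<delta> I \<Gamma> (SProc Q) (LIn c v) W \<Longrightarrow> rcv_conf \<Gamma> (SProc Q) c \<Longrightarrow>
            step \<delta> I \<Gamma> (SProc (PSum P Q)) (LIn c v) W"
| ResI: "step \<delta> I (\<Gamma>(c := (n, v))) W (LOut c w) W' \<Longrightarrow>
         step \<delta> I \<Gamma> (SRes c n v W) LTau
           (SRes c (fst (upd \<delta> (LOut c w) (\<Gamma>(c := (n, v))) c))
                   (snd (upd \<delta> (LOut c w) (\<Gamma>(c := (n, v))) c)) W')"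
| ResV: "step \<delta> I (\<Gamma>(c := (n, v))) W l W' \<Longrightarrow> chan_of l \<noteq> Some c \<Longrightarrow>
         step \<delta> I \<Gamma> (SRes c n v W) l
           (SRes c (fst (upd \<delta> l (\<Gamma>(c := (n, v))) c))
                   (snd (upd \<delta> l (\<Gamma>(c := (n, v))) c)) W')"

end

theory Submission
  imports Defs
begin

inductive_cases stPar: "step \<delta> I \<Gamma> (SPar W1 W2) l W'"
inductive_cases stRes: "step \<delta> I \<Gamma> (SRes c n v W) l W'"
inductive_cases stFix: "step \<delta> I \<Gamma> (SProc (PFix X P)) l W'"
inductive_cases stSum: "step \<delta> I \<Gamma> (SProc (PSum P Q)) l W'"
inductive_cases stRcv: "step \<delta> I \<Gamma> (SProc (PRcv c x P Q)) l W'"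
inductive_cases stNil: "step \<delta> I \<Gamma> (SProc PNil) l W'"
inductive_cases stSleep: "step \<delta> I \<Gamma> (SProc (PSleep P)) l W'"
inductive_cases stAct: "step \<delta> I \<Gamma> (SActRcv c x P) l W'"

lemma aux:
  "step \<delta> I \<Gamma> W l W1 \<Longrightarrow> l = LSigma \<Longrightarrow>
     (\<forall>W2. \<not> step \<delta> I \<Gamma> W LTau W2) \<and> (\<forall>c v W2. \<not> step \<delta> I \<Gamma> W (LOut c v) W2)"
proof (induction rule: step.induct)
  case (TimeNil \<Gamma>)
  then show ?case by (auto elim: stNil)
next
  case (Sleep \<Gamma> P)
  then show ?case by (auto elim: stSleep)
next
  case (ActRcv \<Gamma> c x P)
  then show ?case by (auto elim: stAct)
next
  case (EndRcv \<Gamma> c w x P)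
  then show ?case by (auto elim: stAct)
next
  case (Timeout \<Gamma> c x P Q)
  then show ?case by (auto elim: stRcv simp: exposed_def)
next
  case (TimePar \<Gamma> W1 W1' W2 W2')
  then show ?case by (auto elim: stPar)
next
  case (Rec \<Gamma> X P l W)
  then show ?case by (auto elim: stFix)
next
  case (SumTime \<Gamma> P P' Q Q')
  then show ?case by (auto elim: stSum)
next
  case (ResV \<Gamma> c n v W l W')
  then have h: "\<forall>W2. \<not> step \<delta> I (\<Gamma>(c := (n, v))) W LTau W2"
     "\<forall>d w W2. \<not> step \<delta> I (\<Gamma>(c := (n, v))) W (LOut d w) W2" using ResV by (metis (no_types, lifting) fun_upd_def)+
  show ?case
  proof (intro conjI allI notI)
    fix W2 assume "step \<delta> I \<Gamma> (SRes c n v W) LTau W2"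
    then show False by (rule stRes) (use h in blast)+
  next
    fix d w W2 assume "step \<delta> I \<Gamma> (SRes c n v W) (LOut d w) W2"
    then show False by (rule stRes) (use h in blast)+
  qed
qed auto

theorem mainTheorem3:
  fixes \<delta> :: "'a cval \<Rightarrow> nat"
    and I :: "'f \<Rightarrow> 'a cval list \<Rightarrow> 'a cval"
    and \<Gamma> :: "('c,'a) env"
    and W W1 :: "('c,'a,'f) sys"
  assumes delta_pos: "\<forall>v. \<delta> v \<ge> 1"
    and closed: "closed_sys W"
    and wf: "wf_s W"
    and sig: "step \<delta> I \<Gamma> W LSigma W1"
  shows "(\<nexists>W2. step \<delta> I \<Gamma> W LTau W2) \<and> (\<forall>c v. \<nexists>W2. step \<delta> I \<Gamma> W (LOut c v) W2)"
  using aux[OF sig] by blast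

end
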